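(* Let $H,K$ be complex Hilbert spaces, fix $\lambda\in(0,1)$, and let $\Phi:\mathcal{B}(H)\to\mathcal{B}(K)$ be a bijective map satisfying $\Delta_\lambda(\Phi(A)\Phi(B))=\Phi(\Delta_\lambda(AB))$ for all $A,B\in\mathcal{B}(H)$. Let $h:\mathbb{C}\to\mathbb{C}$ be the function with $\Phi(\alpha I)=h(\alpha)I$ for all $\alpha\in\mathbb{C}$. Then for every $A\in\mathcal{B}(H)$ and all unit vectors $x\in H$, $y\in K$ with $\Phi(x\otimes x)=y\otimes y$, $$\langle\Phi(A)y,y\rangle=h(\langle Ax,x\rangle).$$
   Context: For vectors $x,y$, $x\otimes y$ denotes the operator $u\mapsto\langle u,y\rangle x$. For $T\in\mathcal{B}(H)$, $|T|=(T^*T)^{1/2}$ and $T=V|T|$ is the polar decomposition, where $V$ is the partial isometry with $\mathcal{N}(V)=\mathcal{N}(T)$ and $\mathcal{N}(V^* )=\mathcal{N}(T^* )$. For $\lambda\in[0,1]$, the $\lambda$-Aluthge transform of $T$ is $\Delta_\lambda(T)=|T|^\lambda V|T|^{1-\lambda}$, with powers defined by continuous functional calculus. For such $\Phi$ there always exists a function $h$ with $\Phi(\alpha I)=h(\alpha)I$ for all $\alpha$. No linearity or continuity of $\Phi$ is assumed. *)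

theory Defs
  imports "HOL-Analysis.Analysis" "HOL-Computational_Algebra.Polynomial"
begin

text \<open>HOL-Analysis only has real inner product spaces, so we introduce complex
Hilbert spaces as a type class: a complete real normed vector space with a
complex scalar multiplication extending the real one and a complex inner product
(linear in the first argument) inducing the norm.\<close>

class complex_hilbert = real_normed_vector + complete_space +
  fixes scaleC :: "complex \<Rightarrow> 'a \<Rightarrow> 'a" (infixr \<open>*\<^sub>C\<close> 75)
    and cinner :: "'a \<Rightarrow> 'a \<Rightarrow> complex"
  assumes scaleC_add_right: "a *\<^sub>C (x + y) = a *\<^sub>C x + a *\<^sub>C y"
    and scaleC_add_left: "(a + b) *\<^sub>C x = a *\<^sub>C x + b *\<^sub>C x"
    and scaleC_scaleC: "a *\<^sub>C (b *\<^sub>C x) = (a * b) *\<^sub>C x"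
    and scaleC_one: "1 *\<^sub>C x = x"
    and scaleR_scaleC: "scaleR r x = complex_of_real r *\<^sub>C x"
    and cinner_add_left: "cinner (x + y) z = cinner x z + cinner y z"
    and cinner_scaleC_left: "cinner (a *\<^sub>C x) y = a * cinner x y"
    and cinner_commute: "cinner y x = cnj (cinner x y)"
    and cinner_Re_nonneg: "0 \<le> Re (cinner x x)"
    and cinner_eq_zero_iff: "cinner x x = 0 \<longleftrightarrow> x = 0"
    and norm_eq_sqrt_cinner: "norm x = sqrt (Re (cinner x x))"

text \<open>Elements of B(H) are represented as bounded complex-linear functions.\<close>

definition bop :: "('a::complex_hilbert \<Rightarrow> 'a) \<Rightarrow> bool" where
  "bop T \<longleftrightarrow> bounded_linear T \<and> (\<forall>c x. T (c *\<^sub>C x) = c *\<^sub>C T x)"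

definition idop :: "'a::complex_hilbert \<Rightarrow> 'a" where
  "idop = (\<lambda>x. x)"

definition rank1 :: "'a::complex_hilbert \<Rightarrow> 'a \<Rightarrow> 'a \<Rightarrow> 'a" where
  "rank1 x y = (\<lambda>u. cinner u y *\<^sub>C x)"

definition adj :: "('a::complex_hilbert \<Rightarrow> 'a) \<Rightarrow> ('a \<Rightarrow> 'a)" where
  "adj T = (THE S. bop S \<and> (\<forall>x y. cinner (T x) y = cinner x (S y)))"

definition ker :: "('a::complex_hilbert \<Rightarrow> 'a) \<Rightarrow> 'a set" where
  "ker T = {x. T x = 0}"

definition orth_compl :: "'a::complex_hilbert set \<Rightarrow> 'a set" where
  "orth_compl S = {x. \<forall>y\<in>S. cinner x y = 0}"

definition partial_isometry :: "('a::complex_hilbert \<Rightarrow> 'a) \<Rightarrow> bool" where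
  "partial_isometry V \<longleftrightarrow> bop V \<and> (\<forall>x\<in>orth_compl (ker V). norm (V x) = norm x)"

definition positive_op :: "('a::complex_hilbert \<Rightarrow> 'a) \<Rightarrow> bool" where
  "positive_op P \<longleftrightarrow> bop P \<and> (\<forall>x. Im (cinner (P x) x) = 0 \<and> 0 \<le> Re (cinner (P x) x))"

definition poly_op :: "real poly \<Rightarrow> ('a::complex_hilbert \<Rightarrow> 'a) \<Rightarrow> 'a \<Rightarrow> 'a" where
  "poly_op p P = (\<lambda>x. \<Sum>i\<le>degree p. coeff p i *\<^sub>R (P ^^ i) x)"

text \<open>For a positive operator P (spectrum in [0, norm P]) and a > 0, the operator
P^a of the continuous functional calculus: the norm limit of p_n(P) for any
sequence of real polynomials p_n converging uniformly to t^a on [0, norm P].\<close>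
definition op_powr :: "('a::complex_hilbert \<Rightarrow> 'a) \<Rightarrow> real \<Rightarrow> ('a \<Rightarrow> 'a)" where
  "op_powr P a = (THE Q. bop Q \<and>
     (\<forall>p :: nat \<Rightarrow> real poly.
        uniform_limit {0..onorm P} (\<lambda>n t. poly (p n) t) (\<lambda>t. t powr a) sequentially \<longrightarrow>
        ((\<lambda>n. onorm (\<lambda>x. poly_op (p n) P x - Q x)) \<longlonglongrightarrow> 0)))"

definition op_abs :: "('a::complex_hilbert \<Rightarrow> 'a) \<Rightarrow> ('a \<Rightarrow> 'a)" where
  "op_abs T = op_powr (adj T \<circ> T) (1/2)"

definition polar_part :: "('a::complex_hilbert \<Rightarrow> 'a) \<Rightarrow> ('a \<Rightarrow> 'a)" where
  "polar_part T = (THE V. partial_isometry V \<and> (\<forall>x. T x = V (op_abs T x)) \<and>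
      ker V = ker T \<and> ker (adj V) = ker (adj T))"

definition aluthge :: "real \<Rightarrow> ('a::complex_hilbert \<Rightarrow> 'a) \<Rightarrow> ('a \<Rightarrow> 'a)" where
  "aluthge l T = op_powr (op_abs T) l \<circ> polar_part T \<circ> op_powr (op_abs T) (1 - l)"

end

theory Submission
  imports Defs
begin


lemma cinner_add_right: "cinner x (y + z) = cinner x y + cinner (x::'a::complex_hilbert) z"
  by (metis cinner_add_left cinner_commute complex_cnj_add)

lemma cinner_scaleC_right: "cinner x (a *\<^sub>C y) = cnj a * cinner (x::'a::complex_hilbert) y"
  by (metis cinner_commute cinner_scaleC_left complex_cnj_mult)

lemma scaleC_zero_left [simp]: "0 *\<^sub>C (x::'a::complex_hilbert) = 0"
  by (metis add_cancel_right_right add_0 scaleC_add_left)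

lemma scaleC_zero_right [simp]: "a *\<^sub>C (0::'a::complex_hilbert) = 0"
  by (metis add_cancel_right_right add_0 scaleC_add_right)

lemma cinner_zero_left [simp]: "cinner 0 (x::'a::complex_hilbert) = 0"
  by (metis cinner_scaleC_left mult_zero_left scaleC_zero_left)

lemma cinner_zero_right [simp]: "cinner (x::'a::complex_hilbert) 0 = 0"
  by (metis cinner_commute cinner_zero_left complex_cnj_zero)

lemma minus_scaleC: "- (x::'a::complex_hilbert) = (-1) *\<^sub>C x"
proof -
  have "- x = scaleR (-1) x" by simp
  also have "\<dots> = complex_of_real (-1) *\<^sub>C x" by (rule scaleR_scaleC)
  finally show ?thesis by simp
qed

lemma scaleC_minus_left: "(- a) *\<^sub>C (x::'a::complex_hilbert) = - (a *\<^sub>C x)"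
  by (simp add: minus_scaleC[of "a *\<^sub>C x"] scaleC_scaleC)

lemma scaleC_minus_right: "a *\<^sub>C (- x::'a::complex_hilbert) = - (a *\<^sub>C x)"
  by (simp add: minus_scaleC[of "a *\<^sub>C x"] minus_scaleC[of x] scaleC_scaleC mult.commute)

lemma scaleC_diff_left: "(a - b) *\<^sub>C (x::'a::complex_hilbert) = a *\<^sub>C x - b *\<^sub>C x"
  using scaleC_add_left[of a "-b" x] by (simp add: scaleC_minus_left)

lemma scaleC_diff_right: "a *\<^sub>C (x - y::'a::complex_hilbert) = a *\<^sub>C x - a *\<^sub>C y"
  using scaleC_add_right[of a x "-y"] by (simp add: scaleC_minus_right)

lemma cinner_minus_left: "cinner (- x) (y::'a::complex_hilbert) = - cinner x y"
  by (simp add: minus_scaleC[of x] cinner_scaleC_left)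

lemma cinner_minus_right: "cinner y (- x::'a::complex_hilbert) = - cinner y x"
  by (simp add: minus_scaleC[of x] cinner_scaleC_right)

lemma cinner_diff_left: "cinner (x - z) (y::'a::complex_hilbert) = cinner x y - cinner z y"
  using cinner_add_left[of x "-z" y] by (simp add: cinner_minus_left)

lemma cinner_diff_right: "cinner y (x - z::'a::complex_hilbert) = cinner y x - cinner y z"
  using cinner_add_right[of y x "-z"] by (simp add: cinner_minus_right)

lemma cinner_self: "cinner x (x::'a::complex_hilbert) = complex_of_real ((norm x)^2)"
proof -
  have "Im (cinner x x) = - Im (cinner x x)"
    using arg_cong[OF cinner_commute[of x x], of Im] by simp
  hence "Im (cinner x x) = 0" by simp
  moreover have "Re (cinner x x) = (norm x)^2"
    using norm_eq_sqrt_cinner[of x] cinner_Re_nonneg[of x] by simp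
  ultimately show ?thesis by (simp add: complex_eq_iff)
qed

lemma norm_scaleC: "norm (a *\<^sub>C (x::'a::complex_hilbert)) = cmod a * norm x"
proof -
  have "cinner (a *\<^sub>C x) (a *\<^sub>C x) = a * cnj a * cinner x x"
    by (simp add: cinner_scaleC_left cinner_scaleC_right mult.assoc)
  hence "complex_of_real ((norm (a *\<^sub>C x))^2) = a * cnj a * complex_of_real ((norm x)^2)"
    by (simp only: cinner_self)
  also have "\<dots> = complex_of_real ((cmod a * norm x)^2)"
    by (simp only: complex_norm_square mult.assoc of_real_mult power_mult_distrib mult.commute mult.left_commute)
  finally have "(norm (a *\<^sub>C x))^2 = (cmod a * norm x)^2" using of_real_eq_iff by blast
  then show ?thesis using power2_eq_iff_nonneg[of "norm (a *\<^sub>C x)" "cmod a * norm x"] by simp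
qed

lemma scaleC_eq_0_iff: "a *\<^sub>C (x::'a::complex_hilbert) = 0 \<longleftrightarrow> a = 0 \<or> x = 0"
  by (metis norm_scaleC mult_eq_0_iff norm_eq_zero zero_less_norm_iff norm_zero)

lemma cinner_unit: "norm (v::'a::complex_hilbert) = 1 \<Longrightarrow> cinner v v = 1"
  by (simp add: cinner_self)


lemma cs_unit:
  assumes u: "norm (u::'a::complex_hilbert) = 1"
  shows "cmod (cinner x u) \<le> norm x"
proof -
  define z where "z = x - cinner x u *\<^sub>C u"
  have uz: "cinner u z = 0"
    by (simp add: z_def cinner_diff_right cinner_scaleC_right cinner_unit[OF u] cinner_commute[of x u])
  have xz: "cinner x z = cinner x x - cnj (cinner x u) * cinner x u"
    by (simp add: z_def cinner_diff_right cinner_scaleC_right)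
  have "cinner z z = cinner x z - cinner x u * cinner u z"
    by (simp add: z_def cinner_diff_left cinner_scaleC_left)
  with uz xz have "cinner z z = cinner x x - cnj (cinner x u) * cinner x u" by simp
  also have "cnj (cinner x u) * cinner x u = complex_of_real ((cmod (cinner x u))^2)"
    by (simp only: complex_norm_square mult.commute)
  finally have "complex_of_real ((norm z)^2) = complex_of_real ((norm x)^2 - (cmod (cinner x u))^2)"
    by (simp only: cinner_self of_real_diff)
  hence "(norm z)^2 = (norm x)^2 - (cmod (cinner x u))^2"
    using of_real_eq_iff by blast
  hence "(cmod (cinner x u))^2 \<le> (norm x)^2" by (smt (verit) zero_le_power2)
  thus ?thesis by (simp add: power2_le_iff_abs_le)
qed

lemma cauchy_schwarz: "cmod (cinner x y) \<le> norm x * norm (y::'a::complex_hilbert)"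
proof (cases "y = 0")
  case True then show ?thesis by simp
next
  case False
  define u where "u = complex_of_real (1 / norm y) *\<^sub>C y"
  have u: "norm u = 1" using False by (simp add: u_def norm_scaleC norm_divide)
  have "complex_of_real (norm y) * complex_of_real (1 / norm y) = 1" using False
    by (simp flip: of_real_mult)
  hence y: "y = complex_of_real (norm y) *\<^sub>C u"
    by (simp only: u_def scaleC_scaleC scaleC_one)
  have "cmod (cinner x y) = norm y * cmod (cinner x u)"
    by (subst y) (simp only: cinner_scaleC_right norm_mult complex_cnj_complex_of_real norm_of_real abs_norm_cancel)
  also have "\<dots> \<le> norm y * norm x" using cs_unit[OF u] by (intro mult_left_mono) auto
  finally show ?thesis by (simp add: mult.commute)
qed



lemma poly_seq_exists:
  fixes f :: "real \<Rightarrow> real"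
  assumes "continuous_on {0..M} f"
  shows "\<exists>p::nat \<Rightarrow> real poly. uniform_limit {0..M} (\<lambda>n t. poly (p n) t) f sequentially"
proof -
  have "\<forall>n. \<exists>q::real poly. \<forall>t\<in>{0..M}. \<bar>f t - poly q t\<bar> < 1 / real (Suc n)"
  proof
    fix n
    obtain g where g: "real_polynomial_function g" "\<And>t. t \<in> {0..M} \<Longrightarrow> \<bar>f t - g t\<bar> < 1 / real (Suc n)"
      using Stone_Weierstrass_real_polynomial_function[OF compact_Icc assms, of "1 / real (Suc n)"] by auto
    then obtain a N where aN: "g = (\<lambda>x. \<Sum>i\<le>N. a i * x^i)"
      using real_polynomial_function_iff_sum by blast
    define q where "q = (\<Sum>i\<le>N. monom (a i) i)"
    have "poly q t = g t" for t by (simp add: q_def aN poly_sum poly_monom)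
    then show "\<exists>q::real poly. \<forall>t\<in>{0..M}. \<bar>f t - poly q t\<bar> < 1 / real (Suc n)"
      using g(2) by metis
  qed
  then obtain p where p: "\<And>n t. t \<in> {0..M} \<Longrightarrow> \<bar>f t - poly (p n) t\<bar> < 1 / real (Suc n)"
    by metis
  have "uniform_limit {0..M} (\<lambda>n t. poly (p n) t) f sequentially"
  proof (rule uniform_limitI)
    fix e :: real assume e: "e > 0"
    obtain N :: nat where N: "1 / real (Suc N) < e" using nat_approx_posE[OF e] by blast
    show "\<forall>\<^sub>F n in sequentially. \<forall>t\<in>{0..M}. dist (poly (p n) t) (f t) < e"
      unfolding eventually_sequentially
    proof (intro exI allI impI ballI)
      fix n t assume n: "N \<le> n" and t: "t \<in> {0..M}"
      have "1 / real (Suc n) \<le> 1 / real (Suc N)" using n by (simp add: frac_le)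
      then show "dist (poly (p n) t) (f t) < e"
        using p[OF t, of n] N by (simp add: dist_real_def abs_minus_commute)
    qed
  qed
  then show ?thesis by blast
qed

lemma rank1_apply: "rank1 w v x = cinner x v *\<^sub>C w"
  by (simp add: rank1_def)

lemma bop_rank1: "bop (rank1 (w::'a::complex_hilbert) v)"
  unfolding bop_def
proof
  show "bounded_linear (rank1 w v)"
  proof (rule bounded_linear_intro[where K = "norm v * norm w"])
    fix x y show "rank1 w v (x + y) = rank1 w v x + rank1 w v y"
      by (simp add: rank1_apply cinner_add_left scaleC_add_left)
  next
    fix r x show "rank1 w v (r *\<^sub>R x) = r *\<^sub>R rank1 w v x"
      by (simp add: rank1_apply scaleR_scaleC cinner_scaleC_left scaleC_scaleC)
  next
    fix x show "norm (rank1 w v x) \<le> norm x * (norm v * norm w)"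
      using cauchy_schwarz[of x v]
      by (simp add: rank1_apply norm_scaleC mult.assoc[symmetric] mult_right_mono)
  qed
  show "\<forall>c x. rank1 w v (c *\<^sub>C x) = c *\<^sub>C rank1 w v x"
    by (simp add: rank1_apply cinner_scaleC_left scaleC_scaleC)
qed

lemma bop_scalar: "bop (\<lambda>u::'a::complex_hilbert. \<alpha> *\<^sub>C idop u)"
  unfolding bop_def
proof
  show "bounded_linear (\<lambda>u::'a. \<alpha> *\<^sub>C idop u)"
  proof (rule bounded_linear_intro[where K = "cmod \<alpha>"])
    fix x y :: 'a show "\<alpha> *\<^sub>C idop (x + y) = \<alpha> *\<^sub>C idop x + \<alpha> *\<^sub>C idop y"
      by (simp add: idop_def scaleC_add_right)
  next
    fix r and x :: 'a show "\<alpha> *\<^sub>C idop (r *\<^sub>R x) = r *\<^sub>R (\<alpha> *\<^sub>C idop x)"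
      by (simp add: idop_def scaleR_scaleC scaleC_scaleC mult.commute)
  next
    fix x :: 'a show "norm (\<alpha> *\<^sub>C idop x) \<le> norm x * cmod \<alpha>"
      by (simp add: idop_def norm_scaleC mult.commute)
  qed
  show "\<forall>c x::'a. \<alpha> *\<^sub>C idop (c *\<^sub>C x) = c *\<^sub>C (\<alpha> *\<^sub>C idop x)"
    by (simp add: idop_def scaleC_scaleC mult.commute)
qed

lemma cinner_ext: "(\<And>x. cinner x a = cinner x (b::'a::complex_hilbert)) \<Longrightarrow> a = b"
proof -
  assume h: "\<And>x. cinner x a = cinner x b"
  have "cinner (a - b) (a - b) = 0" by (simp add: cinner_diff_right h)
  thus "a = b" by (simp add: cinner_eq_zero_iff)
qed

lemma adj_rank1: "adj (rank1 w (v::'a::complex_hilbert)) = rank1 v w"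
  unfolding adj_def
proof (rule the_equality)
  show "bop (rank1 v w) \<and> (\<forall>x y. cinner (rank1 w v x) y = cinner x (rank1 v w y))"
    by (simp add: bop_rank1 rank1_apply cinner_scaleC_left cinner_scaleC_right
        cinner_commute[of y w for y] mult.commute)
next
  fix S assume S: "bop S \<and> (\<forall>x y. cinner (rank1 w v x) y = cinner x (S y))"
  show "S = rank1 v w"
  proof
    fix y
    have "\<And>x. cinner x (S y) = cinner x (rank1 v w y)"
      using S by (simp add: rank1_apply cinner_scaleC_left cinner_scaleC_right
        cinner_commute[of y w] mult.commute)
    thus "S y = rank1 v w y" by (rule cinner_ext)
  qed
qed



lemma linear_rank1: "linear (rank1 (w::'a::complex_hilbert) v)"
  using bop_rank1[of w v] by (simp add: bop_def bounded_linear.linear)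

lemma rank1_scaled: "rank1 (complex_of_real c *\<^sub>C v) v x = c *\<^sub>R rank1 (v::'a::complex_hilbert) v x"
  by (simp add: rank1_apply scaleR_scaleC scaleC_scaleC mult.commute)

lemma rank1_idem: "norm (v::'a::complex_hilbert) = 1 \<Longrightarrow> rank1 v v (rank1 v v x) = rank1 v v x"
  by (simp add: rank1_apply cinner_scaleC_left cinner_unit)

lemma iter_P:
  assumes v: "norm (v::'a::complex_hilbert) = 1"
  shows "(rank1 (complex_of_real c *\<^sub>C v) v ^^ i) x
         = (0^i) *\<^sub>R (x - rank1 v v x) + (c^i) *\<^sub>R rank1 v v x"
proof (induction i)
  case 0 then show ?case by simp
next
  case (Suc i)
  have "(rank1 (complex_of_real c *\<^sub>C v) v ^^ Suc i) x
      = c *\<^sub>R rank1 v v ((0^i) *\<^sub>R (x - rank1 v v x) + (c^i) *\<^sub>R rank1 v v x)"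
    by (simp only: funpow.simps comp_def Suc.IH rank1_scaled)
  also have "\<dots> = (c * c^i) *\<^sub>R rank1 v v x"
    using linear_rank1[of v v] rank1_idem[OF v, of x]
    by (simp add: linear_add linear_scale linear_diff)
  finally show ?case by simp
qed

lemma poly_op_P:
  assumes v: "norm (v::'a::complex_hilbert) = 1"
  shows "poly_op p (rank1 (complex_of_real c *\<^sub>C v) v) x
         = poly p 0 *\<^sub>R (x - rank1 v v x) + poly p c *\<^sub>R rank1 v v x"
proof -
  have "poly_op p (rank1 (complex_of_real c *\<^sub>C v) v) x
     = (\<Sum>i\<le>degree p. (coeff p i * 0^i) *\<^sub>R (x - rank1 v v x) + (coeff p i * c^i) *\<^sub>R rank1 v v x)"
    by (simp add: poly_op_def iter_P[OF v] scaleR_add_right)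
  also have "\<dots> = poly p 0 *\<^sub>R (x - rank1 v v x) + poly p c *\<^sub>R rank1 v v x"
    by (simp add: sum.distrib scaleR_sum_left[symmetric] poly_altdef[of p 0] poly_altdef[of p c])
  finally show ?thesis .
qed

lemma norm_rank1_unit: "norm (v::'a::complex_hilbert) = 1 \<Longrightarrow> norm (rank1 v v x) \<le> norm x"
  using cs_unit[of v x] by (simp add: rank1_apply norm_scaleC)

lemma bl_comb: "norm (v::'a::complex_hilbert) = 1 \<Longrightarrow>
  bounded_linear (\<lambda>x. s *\<^sub>R (x - rank1 v v x) + t *\<^sub>R rank1 v v x)"
  using bop_rank1[of v v] unfolding bop_def
  by (intro bounded_linear_add bounded_linear_compose[OF bounded_linear_scaleR_right]
      bounded_linear_sub bounded_linear_ident) auto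

lemma onorm_comb:
  assumes v: "norm (v::'a::complex_hilbert) = 1"
  shows "onorm (\<lambda>x. s *\<^sub>R (x - rank1 v v x) + t *\<^sub>R rank1 v v x) \<le> 2 * \<bar>s\<bar> + \<bar>t\<bar>"
proof (rule onorm_bound)
  show "0 \<le> 2 * \<bar>s\<bar> + \<bar>t\<bar>" by simp
  fix x
  have "norm (s *\<^sub>R (x - rank1 v v x) + t *\<^sub>R rank1 v v x)
      \<le> \<bar>s\<bar> * norm (x - rank1 v v x) + \<bar>t\<bar> * norm (rank1 v v x)"
    by (rule order_trans[OF norm_triangle_ineq]) simp
  also have "\<dots> \<le> \<bar>s\<bar> * (2 * norm x) + \<bar>t\<bar> * norm x"
  proof (intro add_mono mult_left_mono)
    show "norm (x - rank1 v v x) \<le> 2 * norm x"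
      using norm_triangle_ineq4[of x "rank1 v v x"] norm_rank1_unit[OF v, of x] by simp
  qed (use norm_rank1_unit[OF v, of x] in auto)
  finally show "norm (s *\<^sub>R (x - rank1 v v x) + t *\<^sub>R rank1 v v x) \<le> (2 * \<bar>s\<bar> + \<bar>t\<bar>) * norm x"
    by (simp add: algebra_simps)
qed

lemma op_limit_unique:
  fixes F :: "nat \<Rightarrow> 'a::real_normed_vector \<Rightarrow> 'b::real_normed_vector"
  assumes F: "\<And>n. bounded_linear (F n)" and Q1: "bounded_linear Q1" and Q2: "bounded_linear Q2"
    and l1: "(\<lambda>n. onorm (\<lambda>x. F n x - Q1 x)) \<longlonglongrightarrow> 0"
    and l2: "(\<lambda>n. onorm (\<lambda>x. F n x - Q2 x)) \<longlonglongrightarrow> 0"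
  shows "Q1 = Q2"
proof
  fix x
  have b: "norm (Q1 x - Q2 x) \<le> (onorm (\<lambda>x. F n x - Q1 x) + onorm (\<lambda>x. F n x - Q2 x)) * norm x" for n
  proof -
    have "norm (Q1 x - Q2 x) \<le> norm (F n x - Q1 x) + norm (F n x - Q2 x)"
    proof -
      have eq: "Q1 x - Q2 x = (F n x - Q2 x) - (F n x - Q1 x)" by simp
      show ?thesis by (subst eq, rule order_trans[OF norm_triangle_ineq4]) simp
    qed
    also have "\<dots> \<le> onorm (\<lambda>x. F n x - Q1 x) * norm x + onorm (\<lambda>x. F n x - Q2 x) * norm x"
      by (intro add_mono onorm bounded_linear_sub F Q1 Q2)
    finally show ?thesis by (simp add: algebra_simps)
  qed
  have "(\<lambda>n. (onorm (\<lambda>x. F n x - Q1 x) + onorm (\<lambda>x. F n x - Q2 x)) * norm x) \<longlonglongrightarrow> (0 + 0) * norm x"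
    by (intro tendsto_intros l1 l2)
  hence "norm (Q1 x - Q2 x) \<le> (0 + 0) * norm x"
    by (rule tendsto_le[OF trivial_limit_sequentially _ tendsto_const]) (simp add: b)
  thus "Q1 x = Q2 x" by simp
qed



lemma bl_rank1: "bounded_linear (rank1 (w::'a::complex_hilbert) v)"
  using bop_rank1[of w v] by (simp add: bop_def)

lemma op_powr_P:
  assumes v: "norm (v::'a::complex_hilbert) = 1" and c: "0 \<le> c" and a: "0 < a"
  shows "op_powr (rank1 (complex_of_real c *\<^sub>C v) v) a = rank1 (complex_of_real (c powr a) *\<^sub>C v) v"
proof -
  define P where "P = rank1 (complex_of_real c *\<^sub>C v) v"
  define Q where "Q = rank1 (complex_of_real (c powr a) *\<^sub>C v) v"
  define M where "M = onorm P"
  have blP: "bounded_linear P" by (simp add: P_def bl_rank1)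
  have blQ: "bounded_linear Q" by (simp add: Q_def bl_rank1)
  have M0: "0 \<le> M" unfolding M_def by (rule onorm_pos_le[OF blP])
  have "P v = c *\<^sub>R v" by (simp add: P_def rank1_apply cinner_unit[OF v] scaleC_one scaleR_scaleC)
  hence "norm (P v) = c" using v c by simp
  hence cM: "c \<le> M" using onorm[OF blP, of v] v by (simp add: M_def)
  have Pform: "\<And>q x. poly_op q P x - Q x
       = poly q 0 *\<^sub>R (x - rank1 v v x) + (poly q c - c powr a) *\<^sub>R rank1 v v x"
    by (simp add: P_def Q_def poly_op_P[OF v] rank1_scaled algebra_simps)
  have Pform': "\<And>q. poly_op q P = (\<lambda>x. poly q 0 *\<^sub>R (x - rank1 v v x) + poly q c *\<^sub>R rank1 v v x)"
    by (simp add: P_def poly_op_P[OF v] fun_eq_iff)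
  have conv: "(\<lambda>n. onorm (\<lambda>x. poly_op (p n) P x - Q x)) \<longlonglongrightarrow> 0"
    if ul: "uniform_limit {0..M} (\<lambda>n t. poly (p n) t) (\<lambda>t. t powr a) sequentially" for p
  proof -
    have l0: "(\<lambda>n. poly (p n) 0) \<longlonglongrightarrow> 0 powr a"
      by (rule tendsto_uniform_limitI[OF ul]) (use M0 in auto)
    have lc: "(\<lambda>n. poly (p n) c) \<longlonglongrightarrow> c powr a"
      by (rule tendsto_uniform_limitI[OF ul]) (use c cM in auto)
    have up: "(\<lambda>n. 2 * \<bar>poly (p n) 0\<bar> + \<bar>poly (p n) c - c powr a\<bar>) \<longlonglongrightarrow> 2 * \<bar>0\<bar> + \<bar>c powr a - c powr a\<bar>"
      using l0 lc by (intro tendsto_intros) auto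
    show ?thesis
    proof (rule tendsto_sandwich[OF _ _ tendsto_const])
      show "\<forall>\<^sub>F n in sequentially. 0 \<le> onorm (\<lambda>x. poly_op (p n) P x - Q x)"
        by (simp add: Pform onorm_pos_le bl_comb[OF v])
      show "\<forall>\<^sub>F n in sequentially. onorm (\<lambda>x. poly_op (p n) P x - Q x)
              \<le> 2 * \<bar>poly (p n) 0\<bar> + \<bar>poly (p n) c - c powr a\<bar>"
        by (simp add: Pform onorm_comb[OF v])
      show "(\<lambda>n. 2 * \<bar>poly (p n) 0\<bar> + \<bar>poly (p n) c - c powr a\<bar>) \<longlonglongrightarrow> 0"
        using up by simp
    qed
  qed
  have "op_powr P a = Q"
    unfolding op_powr_def M_def[symmetric]
  proof (rule the_equality)
    show "bop Q \<and> (\<forall>p. uniform_limit {0..M} (\<lambda>n. poly (p n)) (\<lambda>t. t powr a) sequentially \<longrightarrow>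
          (\<lambda>n. onorm (\<lambda>x. poly_op (p n) P x - Q x)) \<longlonglongrightarrow> 0)"
      using conv by (simp add: Q_def bop_rank1)
  next
    fix Q' assume H: "bop Q' \<and> (\<forall>p. uniform_limit {0..M} (\<lambda>n. poly (p n)) (\<lambda>t. t powr a) sequentially \<longrightarrow>
          (\<lambda>n. onorm (\<lambda>x. poly_op (p n) P x - Q' x)) \<longlonglongrightarrow> 0)"
    have "continuous_on {0..M} (\<lambda>t::real. t powr a)"
      by (rule continuous_on_powr') (use a in \<open>auto intro: continuous_intros\<close>)
    then obtain p where ul: "uniform_limit {0..M} (\<lambda>n t. poly (p n) t) (\<lambda>t. t powr a) sequentially"
      using poly_seq_exists by blast
    show "Q' = Q"
    proof (rule op_limit_unique)
      show "\<And>n. bounded_linear (poly_op (p n) P)" by (simp add: Pform' bl_comb[OF v])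
      show "bounded_linear Q'" using H by (simp add: bop_def)
      show "bounded_linear Q" by (rule blQ)
      show "(\<lambda>n. onorm (\<lambda>x. poly_op (p n) P x - Q' x)) \<longlonglongrightarrow> 0" using H ul by auto
      show "(\<lambda>n. onorm (\<lambda>x. poly_op (p n) P x - Q x)) \<longlonglongrightarrow> 0" using conv[OF ul] .
    qed
  qed
  thus ?thesis by (simp add: P_def Q_def)
qed



lemma op_abs_rank1:
  assumes v: "norm (v::'a::complex_hilbert) = 1"
  shows "op_abs (rank1 w v) = rank1 (complex_of_real (norm w) *\<^sub>C v) v"
proof -
  have e1: "adj (rank1 w v) \<circ> rank1 w v = rank1 (complex_of_real ((norm w)^2) *\<^sub>C v) v"
    by (simp add: adj_rank1 fun_eq_iff rank1_apply cinner_scaleC_left cinner_self scaleC_scaleC mult.commute)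
  have e2: "((norm w)^2) powr (1/2) = norm w"
    by (simp add: powr_half_sqrt)
  have "op_abs (rank1 w v) = op_powr (rank1 (complex_of_real ((norm w)^2) *\<^sub>C v) v) (1/2)"
    by (simp only: op_abs_def e1)
  also have "\<dots> = rank1 (complex_of_real (((norm w)^2) powr (1/2)) *\<^sub>C v) v"
    by (rule op_powr_P[OF v]) auto
  finally show ?thesis by (simp only: e2)
qed

lemma ker_rank1: "ker (rank1 a (b::'a::complex_hilbert)) = (if a = 0 then UNIV else {x. cinner x b = 0})"
  by (auto simp: ker_def rank1_apply scaleC_eq_0_iff)

lemma orth_compl_UNIV: "orth_compl (UNIV::'a::complex_hilbert set) = {0}"
proof -
  have "x = 0" if "\<forall>y. cinner x y = (0::complex)" for x :: 'a
    using that cinner_eq_zero_iff[of x] by blast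
  thus ?thesis by (auto simp: orth_compl_def)
qed

lemma decomp:
  assumes v: "norm (v::'a::complex_hilbert) = 1"
  shows "cinner (x - cinner x v *\<^sub>C v) v = 0"
  by (simp add: cinner_diff_left cinner_scaleC_left cinner_unit[OF v])

lemma orth_ker_unit:
  assumes v: "norm (v::'a::complex_hilbert) = 1" and x: "x \<in> orth_compl {y. cinner y v = 0}"
  shows "x = cinner x v *\<^sub>C v"
proof -
  define z where "z = x - cinner x v *\<^sub>C v"
  have zv: "cinner z v = 0" using decomp[OF v] by (simp add: z_def)
  hence xz: "cinner x z = 0" using x by (simp add: orth_compl_def)
  have "cinner z z = cinner x z - cinner x v * cinner v z"
    by (simp add: z_def cinner_diff_left cinner_scaleC_left)
  also have "cinner v z = 0" using zv cinner_commute[of v z] by simp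
  finally have "cinner z z = 0" using xz by simp
  hence "z = 0" by (simp add: cinner_eq_zero_iff)
  thus ?thesis by (simp add: z_def)
qed

lemma polar_rank1:
  assumes v: "norm (v::'a::complex_hilbert) = 1"
  shows "polar_part (rank1 w v) = rank1 (complex_of_real (1 / norm w) *\<^sub>C w) v"
  unfolding polar_part_def
proof (rule the_equality)
  define w' where "w' = complex_of_real (1 / norm w) *\<^sub>C w"
  have w'0: "w' = 0 \<longleftrightarrow> w = 0" by (simp add: w'_def scaleC_eq_0_iff)
  have v0: "v \<noteq> 0" using v by auto
  have nw': "w \<noteq> 0 \<Longrightarrow> norm w' = 1" by (simp add: w'_def norm_scaleC norm_divide)
  show "partial_isometry (rank1 w' v) \<and> (\<forall>x. rank1 w v x = rank1 w' v (op_abs (rank1 w v) x)) \<and>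
        ker (rank1 w' v) = ker (rank1 w v) \<and> ker (adj (rank1 w' v)) = ker (adj (rank1 w v))"
  proof (intro conjI allI)
    show "partial_isometry (rank1 w' v)"
      unfolding partial_isometry_def
    proof (intro conjI ballI)
      show "bop (rank1 w' v)" by (rule bop_rank1)
      fix x assume x: "x \<in> orth_compl (ker (rank1 w' v))"
      show "norm (rank1 w' v x) = norm x"
      proof (cases "w = 0")
        case True then show ?thesis using x w'0 by (simp add: ker_rank1 orth_compl_UNIV rank1_apply)
      next
        case False
        hence "x = cinner x v *\<^sub>C v" using x w'0 by (intro orth_ker_unit[OF v]) (simp add: ker_rank1)
        hence "norm x = cmod (cinner x v)" by (metis norm_scaleC v mult_1_right)
        then show ?thesis using nw'[OF False] by (simp add: rank1_apply norm_scaleC)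
      qed
    qed
  next
    fix x
    show "rank1 w v x = rank1 w' v (op_abs (rank1 w v) x)"
    proof (cases "w = 0")
      case True then show ?thesis using w'0 by (simp add: rank1_apply)
    next
      case False
      have "complex_of_real (norm w) * complex_of_real (1 / norm w) = 1"
        using False by (simp flip: of_real_mult)
      then show ?thesis
        by (simp add: op_abs_rank1[OF v] rank1_apply w'_def cinner_scaleC_left cinner_unit[OF v]
            scaleC_scaleC mult.assoc)
    qed
  next
    show "ker (rank1 w' v) = ker (rank1 w v)" using w'0 by (simp add: ker_rank1)
  next
    show "ker (adj (rank1 w' v)) = ker (adj (rank1 w v))"
      using v0 by (auto simp: adj_rank1 ker_rank1 w'_def cinner_scaleC_right)
  qed
  fix V assume H: "partial_isometry V \<and> (\<forall>x. rank1 w v x = V (op_abs (rank1 w v) x)) \<and>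
        ker V = ker (rank1 w v) \<and> ker (adj V) = ker (adj (rank1 w v))"
  hence bV: "bop V" and TV: "\<And>x. rank1 w v x = V (op_abs (rank1 w v) x)"
    and kV: "ker V = ker (rank1 w v)" by (auto simp: partial_isometry_def)
  have addV: "V (a + b) = V a + V b" for a b
    using bV by (simp add: bop_def bounded_linear.linear linear_add)
  have sV: "V (c *\<^sub>C a) = c *\<^sub>C V a" for c a using bV by (simp add: bop_def)
  show "V = rank1 w' v"
  proof
    fix x
    show "V x = rank1 w' v x"
    proof (cases "w = 0")
      case True
      hence "x \<in> ker V" using kV by (simp add: ker_rank1)
      then show ?thesis using True w'0 by (simp add: ker_def rank1_apply)
    next
      case False
      define z where "z = x - cinner x v *\<^sub>C v"
      have "z \<in> ker V" using kV decomp[OF v, of x] False by (simp add: ker_rank1 z_def)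
      hence Vz: "V z = 0" by (simp add: ker_def)
      have "w = V (complex_of_real (norm w) *\<^sub>C v)"
        using TV[of v] by (simp add: op_abs_rank1[OF v] rank1_apply cinner_unit[OF v] scaleC_one)
      hence "w = complex_of_real (norm w) *\<^sub>C V v" by (simp add: sV)
      hence "w' = complex_of_real (1 / norm w) *\<^sub>C (complex_of_real (norm w) *\<^sub>C V v)"
        unfolding w'_def by (rule arg_cong)
      hence "w' = (complex_of_real (1 / norm w) * complex_of_real (norm w)) *\<^sub>C V v"
        by (simp only: scaleC_scaleC)
      also have "complex_of_real (1 / norm w) * complex_of_real (norm w) = 1"
        using False by (simp flip: of_real_mult)
      finally have Vv: "V v = w'" by (simp add: scaleC_one)
      have "x = cinner x v *\<^sub>C v + z" by (simp add: z_def)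
      hence "V x = V (cinner x v *\<^sub>C v) + V z" by (metis addV)
      also have "\<dots> = cinner x v *\<^sub>C w'" by (simp add: Vz sV Vv)
      finally show ?thesis by (simp add: rank1_apply)
    qed
  qed
qed



lemma aluthge_rank1:
  assumes v: "norm (v::'a::complex_hilbert) = 1" and l: "0 < l" "l < 1"
  shows "aluthge l (rank1 w v) = rank1 (cinner w v *\<^sub>C v) v"
proof
  fix x
  define n where "n = norm w"
  have A: "op_powr (op_abs (rank1 w v)) l = rank1 (complex_of_real (n powr l) *\<^sub>C v) v"
    using l by (simp add: op_abs_rank1[OF v] op_powr_P[OF v] n_def)
  have B: "op_powr (op_abs (rank1 w v)) (1 - l) = rank1 (complex_of_real (n powr (1 - l)) *\<^sub>C v) v"
    using l by (simp add: op_abs_rank1[OF v] op_powr_P[OF v] n_def)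
  have "aluthge l (rank1 w v) x
      = ((complex_of_real (n powr l) * complex_of_real (n powr (1 - l)) * complex_of_real (1 / n))
         * cinner x v * cinner w v) *\<^sub>C v"
    unfolding aluthge_def A B polar_rank1[OF v] n_def[symmetric]
    by (simp add: rank1_apply cinner_scaleC_left cinner_unit[OF v] scaleC_scaleC mult_ac)
  also have "\<dots> = (cinner w v * cinner x v) *\<^sub>C v"
  proof (cases "w = 0")
    case True then show ?thesis by simp
  next
    case False
    hence "n > 0" by (simp add: n_def)
    hence "n powr l * n powr (1 - l) * (1 / n) = 1"
      by (simp flip: powr_add)
    hence "complex_of_real (n powr l) * complex_of_real (n powr (1 - l)) * complex_of_real (1 / n) = 1"
      by (metis of_real_1 of_real_mult)
    then show ?thesis by (simp add: mult.commute)
  qed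
  finally show "aluthge l (rank1 w v) x = rank1 (cinner w v *\<^sub>C v) v x"
    by (simp add: rank1_apply scaleC_scaleC mult.commute)
qed

lemma comp_rank1: "bop A \<Longrightarrow> A \<circ> rank1 w v = rank1 (A w) (v::'a::complex_hilbert)"
  by (simp add: fun_eq_iff rank1_apply bop_def)

theorem mainTheorem10:
  fixes \<Phi> :: "('a::complex_hilbert \<Rightarrow> 'a) \<Rightarrow> ('b::complex_hilbert \<Rightarrow> 'b)"
    and l :: real
    and h :: "complex \<Rightarrow> complex"
  assumes l: "0 < l" "l < 1"
    and bij: "bij_betw \<Phi> {T. bop T} {T. bop T}"
    and pres: "\<And>A B. bop A \<Longrightarrow> bop B \<Longrightarrow>
               aluthge l (\<Phi> A \<circ> \<Phi> B) = \<Phi> (aluthge l (A \<circ> B))"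
    and h: "\<And>\<alpha>. \<Phi> (\<lambda>u. \<alpha> *\<^sub>C idop u) = (\<lambda>v. h \<alpha> *\<^sub>C idop v)"
  shows "\<forall>A x y. bop A \<longrightarrow> norm x = 1 \<longrightarrow> norm y = 1 \<longrightarrow>
           \<Phi> (rank1 x x) = rank1 y y \<longrightarrow>
           cinner (\<Phi> A y) y = h (cinner (A x) x)"
proof (intro allI impI)
  fix A :: "'a \<Rightarrow> 'a" and x :: 'a and y :: 'b
  assume A: "bop A" and x: "norm (x::'a) = 1" and y: "norm (y::'b) = 1"
    and P: "\<Phi> (rank1 x x) = rank1 y y"
  define \<alpha> where "\<alpha> = cinner (A x) x"
  have bPA: "bop (\<Phi> A)" using bij A by (auto simp: bij_betw_def)
  have S: "bop (\<lambda>u::'a. \<alpha> *\<^sub>C idop u)" by (rule bop_scalar)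
  have S': "bop (\<lambda>u::'b. h \<alpha> *\<^sub>C idop u)" by (rule bop_scalar)
  have e1: "rank1 (cinner (\<Phi> A y) y *\<^sub>C y) y = \<Phi> (rank1 (\<alpha> *\<^sub>C x) x)"
    using pres[OF A bop_rank1[of x x]]
    by (simp add: P comp_rank1[OF bPA] comp_rank1[OF A] aluthge_rank1[OF x l] aluthge_rank1[OF y l] \<alpha>_def)
  have c1: "(\<lambda>u::'a. \<alpha> *\<^sub>C idop u) \<circ> rank1 x x = rank1 (\<alpha> *\<^sub>C x) x"
    using comp_rank1[OF S, of x x] by (simp add: idop_def)
  have c2: "\<Phi> (\<lambda>u::'a. \<alpha> *\<^sub>C idop u) \<circ> rank1 y y = rank1 (h \<alpha> *\<^sub>C y) y"
    unfolding h using comp_rank1[OF S', of y y] by (simp add: idop_def)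
  have e2: "rank1 (h \<alpha> *\<^sub>C y) y = \<Phi> (rank1 (\<alpha> *\<^sub>C x) x)"
    using pres[OF S bop_rank1[of x x]] unfolding P c1 c2 aluthge_rank1[OF x l] aluthge_rank1[OF y l]
    by (simp add: cinner_scaleC_left cinner_unit[OF x] cinner_unit[OF y])
  have "rank1 (cinner (\<Phi> A y) y *\<^sub>C y) y y = rank1 (h \<alpha> *\<^sub>C y) y y"
    using e1 e2 by simp
  hence "cinner (\<Phi> A y) y *\<^sub>C y = h \<alpha> *\<^sub>C y"
    by (simp add: rank1_apply cinner_unit[OF y] scaleC_one)
  hence "cinner (cinner (\<Phi> A y) y *\<^sub>C y) y = cinner (h \<alpha> *\<^sub>C y) y" by simp
  thus "cinner (\<Phi> A y) y = h (cinner (A x) x)"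
    by (simp add: cinner_scaleC_left cinner_unit[OF y] \<alpha>_def)
qed


end
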